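(* Let $n\ge 2$, $l\in\{1,\dots,n\}$ and $m=l(n-1)$. Among all simple directed graphs with $n$ vertices and $m$ arcs, the maximal algebraic connectivity is $l$, and it is achieved by any graph that is the union of $l$ simple $n$-vertex directed stars rooted at $l$ distinct vertices.
   Context: A simple directed graph has no self-arcs and no repeated arcs; an arc $(j,i)$ goes from $j$ to $i$. The (in-degree) Laplacian of $\mathbb G$ on vertices $\{1,\dots,n\}$ is $L(\mathbb G)=D-A$, $D$ the diagonal matrix of in-degrees, $A_{ij}=1$ if $(j,i)$ is an arc and $0$ otherwise. The algebraic connectivity is the second smallest real part among the $n$ eigenvalues of $L(\mathbb G)$ counted with algebraic multiplicity. The $n$-vertex directed star rooted at vertex $r$ is the graph on $\{1,\dots,n\}$ whose arcs are $(r,j)$ for all $j\ne r$. The union of graphs on the same vertex set is the graph on that vertex set whose arc set is the union of their arc sets. *)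

theory Defs
  imports "Jordan_Normal_Form.Char_Poly" "HOL-Computational_Algebra.Polynomial"
begin

text \<open>Vertices are 0,...,n-1; an arc (j,i) goes from j to i.\<close>

definition simple_digraph :: "nat \<Rightarrow> (nat \<times> nat) set \<Rightarrow> bool" where
  "simple_digraph n E \<longleftrightarrow> E \<subseteq> {0..<n} \<times> {0..<n} \<and> (\<forall>i. (i, i) \<notin> E)"

definition in_degree :: "(nat \<times> nat) set \<Rightarrow> nat \<Rightarrow> nat" where
  "in_degree E i = card {j. (j, i) \<in> E}"

definition laplacian :: "nat \<Rightarrow> (nat \<times> nat) set \<Rightarrow> complex mat" where
  "laplacian n E = mat n n (\<lambda>(i, j).
     (if i = j then of_nat (in_degree E i) else 0) - (if (j, i) \<in> E then 1 else 0))"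

definition lap_eigenvalues :: "nat \<Rightarrow> (nat \<times> nat) set \<Rightarrow> complex multiset" where
  "lap_eigenvalues n E = proots (char_poly (laplacian n E))"

definition algebraic_connectivity :: "nat \<Rightarrow> (nat \<times> nat) set \<Rightarrow> real" where
  "algebraic_connectivity n E =
     sorted_list_of_multiset (image_mset Re (lap_eigenvalues n E)) ! 1"

definition directed_star :: "nat \<Rightarrow> nat \<Rightarrow> (nat \<times> nat) set" where
  "directed_star n r = {(r, j) | j. j < n \<and> j \<noteq> r}"

end

theory Submission
  imports Defs "Jordan_Normal_Form.Schur_Decomposition"
begin


definition tr :: "complex mat \<Rightarrow> complex" where
  "tr A = (\<Sum>i<dim_row A. A $$ (i,i))"

lemma tr_comm:
  assumes "A \<in> carrier_mat n n" "B \<in> carrier_mat n n"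
  shows "tr (A * B) = tr (B * A)"
proof -
  have "tr (A * B) = (\<Sum>i<n. \<Sum>k<n. A $$ (i,k) * B $$ (k,i))"
    using assms unfolding tr_def
    by (auto simp: scalar_prod_def atLeast0LessThan intro!: sum.cong)
  also have "\<dots> = (\<Sum>k<n. \<Sum>i<n. B $$ (k,i) * A $$ (i,k))"
    by (subst sum.swap) (simp add: mult.commute)
  also have "\<dots> = tr (B * A)"
    using assms unfolding tr_def
    by (auto simp: scalar_prod_def atLeast0LessThan intro!: sum.cong)
  finally show ?thesis .
qed

lemma proots_lin_prod:
  "proots (\<Prod>a\<leftarrow>es. [:- a, 1:]) = mset (es :: complex list)"
proof (induction es)
  case Nil then show ?case by simp
next
  case (Cons a es)
  have "(\<Prod>a\<leftarrow>es. [:- a, 1:]) \<noteq> 0"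
    by (auto simp: prod_list_zero_iff)
  then have "proots ([:- a, 1:] * (\<Prod>a\<leftarrow>es. [:- a, 1:])) = proots [:- a, 1:] + proots (\<Prod>a\<leftarrow>es. [:- a, 1:])"
    by (intro proots_mult) auto
  moreover have "proots [:- a, 1:] = {#a#}" using proots_linear_factor[of "-a"] by simp
  ultimately show ?case using Cons by (simp del: mult_pCons_left add: add.commute)
qed

lemma eig_trace:
  fixes A :: "complex mat"
  assumes A: "A \<in> carrier_mat n n"
  shows "size (proots (char_poly A)) = n \<and> sum_mset (proots (char_poly A)) = tr A"
proof -
  obtain es where cp: "char_poly A = (\<Prod> a \<leftarrow> es. [:- a, 1:])" and len: "length es = n"
    using char_poly_factorized[OF A] by blast
  have pr: "proots (char_poly A) = mset es" using cp proots_lin_prod by simp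
  obtain B P Q where sd: "schur_decomposition A es = (B,P,Q)"
    by (cases "schur_decomposition A es") auto
  from schur_decomposition[OF A cp sd]
  have sim: "similar_mat_wit A B P Q" and dg: "diag_mat B = es" by auto
  note w = similar_mat_witD2[OF A sim]
  have "tr A = tr (P * B * Q)" using w by simp
  also have "\<dots> = tr (Q * (P * B))"
    by (rule tr_comm[of _ n]) (use w in auto)
  also have "Q * (P * B) = (Q * P) * B"
    using w by (metis assoc_mult_mat)
  also have "\<dots> = B" using w by simp
  finally have "tr A = tr B" .
  moreover have "tr B = sum_list es"
    unfolding dg[symmetric] diag_mat_def tr_def
    by (simp add: sum_list_sum_nth atLeast0LessThan)
  ultimately show ?thesis using pr len by (simp add: sum_mset_sum_list)
qed



lemma sum_list_ge: "(\<forall>z\<in>set zs. c \<le> z) \<Longrightarrow> real (length zs) * c \<le> sum_list zs"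
  by (induction zs) (auto simp: algebra_simps)

lemma sum_list_le: "(\<forall>z\<in>set zs. z \<le> c) \<Longrightarrow> sum_list zs \<le> real (length zs) * c"
  by (induction zs) (auto simp: algebra_simps)

lemma part1_list:
  fixes xs :: "real list"
  assumes "sorted xs" "length xs = n" "n \<ge> 2" "sum_list xs = real l * (real n - 1)"
    "0 \<in> set xs" "l \<ge> 1"
  shows "xs ! 1 \<le> real l"
proof (rule ccontr)
  assume c: "\<not> xs ! 1 \<le> real l"
  obtain x0 y1 zs where xs: "xs = x0 # y1 # zs"
    using assms(2,3) by (cases xs; cases "tl xs") auto
  have s: "x0 \<le> y1" "\<forall>z\<in>set zs. y1 \<le> z" using assms(1) xs by auto
  have y1: "y1 > l" using c xs by simp
  have "x0 = 0" using assms(5,6) xs s y1 by auto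
  have lz: "length zs = n - 2" using xs assms(2) by simp
  have "real (length zs) * y1 \<le> sum_list zs" using sum_list_ge s(2) by blast
  hence "sum_list xs \<ge> y1 + real (n-2) * y1" using xs \<open>x0 = 0\<close> lz by simp
  moreover have "y1 + real (n-2) * y1 = (real n - 1) * y1" using assms(3)
    by (simp add: of_nat_diff algebra_simps)
  moreover have "(real n - 1) * y1 > (real n - 1) * real l"
    using y1 assms(3) by (intro mult_strict_left_mono) auto
  ultimately show False using assms(4) by (simp add: algebra_simps)
qed

lemma part2_list:
  fixes xs :: "real list"
  assumes "sorted xs" "length xs = n" "n \<ge> 2" "sum_list xs = real l * (real n - 1)"
    "set xs \<subseteq> {0, real l}" "l \<ge> 1"
  shows "xs ! 1 = real l"
proof (rule ccontr)
  assume c: "xs ! 1 \<noteq> real l"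
  obtain x0 y1 zs where xs: "xs = x0 # y1 # zs"
    using assms(2,3) by (cases xs; cases "tl xs") auto
  have y1: "y1 = 0" using c xs assms(5) by auto
  have "x0 \<le> y1" using assms(1) xs by auto
  hence "x0 = 0" using y1 xs assms(5,6) by auto
  have lz: "length zs = n - 2" using xs assms(2) by simp
  have "\<forall>z\<in>set zs. z \<le> real l" using assms(5) xs by auto
  hence "sum_list zs \<le> real (length zs) * real l" by (rule sum_list_le)
  hence "sum_list xs \<le> real (n-2) * real l" using xs \<open>x0 = 0\<close> y1 lz by simp
  moreover have "real (n-2) * real l < (real n - 1) * real l" using assms(3,6)
    by (intro mult_strict_right_mono) (auto simp: of_nat_diff)
  ultimately show False using assms(4) by (simp add: algebra_simps)
qed



lemma lap_carrier: "laplacian n E \<in> carrier_mat n n"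
  by (simp add: laplacian_def)

lemma lap_mult:
  assumes "i < n" "v \<in> carrier_vec n" "(i,i) \<notin> E"
  shows "(laplacian n E *\<^sub>v v) $ i = of_nat (in_degree E i) * v $ i - (\<Sum>j\<in>{j\<in>{0..<n}. (j,i)\<in>E}. v $ j)"
proof -
  have "(laplacian n E *\<^sub>v v) $ i = (\<Sum>j\<in>{0..<n}. laplacian n E $$ (i,j) * v $ j)"
    using assms lap_carrier[of n E] by (simp add: scalar_prod_def)
  also have "\<dots> = (\<Sum>j\<in>{0..<n}. (if i = j then of_nat (in_degree E i) * v $ j else 0)
       - (if (j,i) \<in> E then v $ j else 0))"
    by (intro sum.cong) (use assms(1) in \<open>auto simp: laplacian_def left_diff_distrib\<close>)
  also have "\<dots> = of_nat (in_degree E i) * v $ i - (\<Sum>j\<in>{0..<n}. if (j,i) \<in> E then v $ j else 0)"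
    using assms by (simp add: sum_subtractf)
  also have "(\<Sum>j\<in>{0..<n}. if (j,i) \<in> E then v $ j else 0) = (\<Sum>j\<in>{j\<in>{0..<n}. (j,i)\<in>E}. v $ j)"
    by (rule sum.inter_filter[symmetric]) simp
  finally show ?thesis .
qed

lemma in_deg_alt:
  assumes "simple_digraph n E" "i < n"
  shows "in_degree E i = card {j\<in>{0..<n}. (j,i)\<in>E}"
proof -
  have "{j. (j,i)\<in>E} = {j\<in>{0..<n}. (j,i)\<in>E}" using assms by (auto simp: simple_digraph_def)
  thus ?thesis by (simp add: in_degree_def)
qed

lemma sum_in_deg:
  assumes "simple_digraph n E"
  shows "(\<Sum>i<n. in_degree E i) = card E"
proof -
  have fin: "finite E" using assms unfolding simple_digraph_def
    by (meson finite_SigmaI finite_atLeastLessThan finite_subset)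
  have E: "E = (\<Union>i\<in>{..<n}. {e\<in>E. snd e = i})" using assms by (auto simp: simple_digraph_def)
  have "card E = (\<Sum>i<n. card {e\<in>E. snd e = i})"
    by (subst E, rule card_UN_disjoint) (use fin in auto)
  also have "\<dots> = (\<Sum>i<n. in_degree E i)"
  proof (rule sum.cong)
    fix i
    have "{e\<in>E. snd e = i} = (\<lambda>j. (j,i)) ` {j. (j,i)\<in>E}" by force
    moreover have "inj_on (\<lambda>j. (j,i)) {j. (j,i)\<in>E}" by (auto simp: inj_on_def)
    ultimately show "card {e\<in>E. snd e = i} = in_degree E i"
      by (simp add: card_image in_degree_def)
  qed simp
  finally show ?thesis by simp
qed

lemma tr_lap:
  assumes "simple_digraph n E"
  shows "tr (laplacian n E) = of_nat (card E)"
proof -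
  have "tr (laplacian n E) = (\<Sum>i<n. of_nat (in_degree E i))"
    using assms unfolding tr_def by (auto simp: laplacian_def simple_digraph_def)
  also have "\<dots> = of_nat (\<Sum>i<n. in_degree E i)" by simp
  finally show ?thesis using sum_in_deg[OF assms] by simp
qed

lemma eig_mem:
  assumes "eigenvalue (laplacian n E) x"
  shows "x \<in># lap_eigenvalues n E"
proof -
  have cp: "char_poly (laplacian n E) \<noteq> 0"
    using degree_monic_char_poly[OF lap_carrier[of n E]] by auto
  have "poly (char_poly (laplacian n E)) x = 0"
    using assms eigenvalue_root_char_poly[OF lap_carrier] by blast
  thus ?thesis using cp unfolding lap_eigenvalues_def by simp
qed

lemma mem_eig:
  assumes "x \<in># lap_eigenvalues n E"
  shows "eigenvalue (laplacian n E) x"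
proof -
  have cp: "char_poly (laplacian n E) \<noteq> 0"
    using degree_monic_char_poly[OF lap_carrier[of n E]] by auto
  have "poly (char_poly (laplacian n E)) x = 0"
    using assms cp unfolding lap_eigenvalues_def by simp
  thus ?thesis using eigenvalue_root_char_poly[OF lap_carrier] by blast
qed

lemma zero_eig:
  assumes "simple_digraph n E" "n \<ge> 1"
  shows "0 \<in># lap_eigenvalues n E"
proof (rule eig_mem)
  have "laplacian n E *\<^sub>v (vec n (\<lambda>_. 1) :: complex vec) = 0 \<cdot>\<^sub>v (vec n (\<lambda>_. 1) :: complex vec)"
  proof (rule eq_vecI)
    fix i assume "i < dim_vec (0 \<cdot>\<^sub>v ((vec n (\<lambda>_. 1) :: complex vec) :: complex vec))"
    hence i: "i < n" by simp
    have ii: "(i,i) \<notin> E" using assms by (auto simp: simple_digraph_def)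
    show "(laplacian n E *\<^sub>v (vec n (\<lambda>_. 1) :: complex vec)) $ i = (0 \<cdot>\<^sub>v (vec n (\<lambda>_. 1) :: complex vec)) $ i"
      using lap_mult[OF i _ ii, of "(vec n (\<lambda>_. 1) :: complex vec)"] i in_deg_alt[OF assms(1) i]
      by simp
  qed (simp add: laplacian_def)
  moreover have "(vec n (\<lambda>_. 1) :: complex vec) \<noteq> (0\<^sub>v n :: complex vec)"
  proof
    assume "(vec n (\<lambda>_. 1) :: complex vec) = (0\<^sub>v n :: complex vec)"
    hence "((vec n (\<lambda>_. 1) :: complex vec) :: complex vec) $ 0 = 0\<^sub>v n $ 0" by simp
    thus False using assms by simp
  qed
  ultimately show "eigenvalue (laplacian n E) 0"
    unfolding eigenvalue_def eigenvector_def using lap_carrier[of n E]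
    by (intro exI[of _ "vec n (\<lambda>_. 1)"]) auto
qed



lemma star_simple:
  assumes "R \<subseteq> {0..<n}"
  shows "simple_digraph n (\<Union>r\<in>R. directed_star n r)"
  using assms by (auto simp: simple_digraph_def directed_star_def)

lemma star_card:
  assumes "R \<subseteq> {0..<n}"
  shows "card (\<Union>r\<in>R. directed_star n r) = card R * (n - 1)"
proof -
  have fR: "finite R" using assms finite_subset by blast
  have ds: "directed_star n r = Pair r ` ({0..<n} - {r})" for r
    by (auto simp: directed_star_def)
  have c: "card (directed_star n r) = n - 1" if "r \<in> R" for r
  proof -
    have "card (directed_star n r) = card ({0..<n} - {r})"
      unfolding ds by (rule card_image) (auto simp: inj_on_def)
    also have "\<dots> = n - 1" using that assms by auto
    finally show ?thesis .
  qed
  have "card (\<Union>r\<in>R. directed_star n r) = (\<Sum>r\<in>R. card (directed_star n r))"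
    by (rule card_UN_disjoint) (use fR in \<open>auto simp: ds\<close>)
  also have "\<dots> = card R * (n - 1)" using c by simp
  finally show ?thesis .
qed

lemma star_in:
  assumes "R \<subseteq> {0..<n}" "i < n"
  shows "{j\<in>{0..<n}. (j,i)\<in>(\<Union>r\<in>R. directed_star n r)} = R - {i}"
  using assms by (auto simp: directed_star_def)

lemma star_eig:
  assumes R: "R \<subseteq> {0..<n}" and ev: "eigenvalue (laplacian n (\<Union>r\<in>R. directed_star n r)) x"
  shows "x = 0 \<or> x = of_nat (card R)"
proof -
  define E where "E = (\<Union>r\<in>R. directed_star n r)"
  define l where "l = card R"
  have fR: "finite R" using R finite_subset by blast
  have sE: "simple_digraph n E" using star_simple[OF R] by (simp add: E_def)
  obtain v where v: "v \<in> carrier_vec n" "v \<noteq> 0\<^sub>v n" "laplacian n E *\<^sub>v v = x \<cdot>\<^sub>v v"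
    using ev lap_carrier[of n E] unfolding eigenvalue_def eigenvector_def E_def by auto
  define s where "s = (\<Sum>r\<in>R. v $ r)"
  have eq: "x * v $ i = of_nat l * v $ i - s" if i: "i < n" for i
  proof -
    have ii: "(i,i) \<notin> E" using sE by (auto simp: simple_digraph_def)
    have "x * v $ i = (laplacian n E *\<^sub>v v) $ i" using v(3) i v(1) by simp
    also have "\<dots> = of_nat (in_degree E i) * v $ i - (\<Sum>j\<in>R - {i}. v $ j)"
      using lap_mult[OF i v(1) ii] star_in[OF R i] unfolding E_def by simp
    also have "in_degree E i = card (R - {i})"
      using in_deg_alt[OF sE i] star_in[OF R i] unfolding E_def by simp
    also have "of_nat (card (R - {i})) * v $ i - (\<Sum>j\<in>R - {i}. v $ j) = of_nat l * v $ i - s"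
    proof (cases "i \<in> R")
      case True
      have "l \<ge> 1" using True fR l_def by (metis card_0_eq empty_iff less_one not_le)
      have "card (R - {i}) = l - 1" using True fR l_def by simp
      hence A: "(of_nat (card (R - {i})) :: complex) = of_nat l - 1" using \<open>l \<ge> 1\<close> by (simp add: of_nat_diff)
      have B: "(\<Sum>j\<in>R - {i}. v $ j) = s - v $ i" using True fR s_def by (simp add: sum_diff1)
      show ?thesis unfolding A B by (simp add: algebra_simps)
    next
      case False
      then show ?thesis by (simp add: l_def s_def)
    qed
    finally show ?thesis .
  qed
  show ?thesis
  proof (rule ccontr)
    assume "\<not> (x = 0 \<or> x = of_nat (card R))"
    hence x0: "x \<noteq> 0" and xl: "of_nat l - x \<noteq> 0" by (auto simp: l_def)
    have vi: "v $ i = s / (of_nat l - x)" if "i < n" for i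
      using eq[OF that] xl by (simp add: field_simps)
    obtain i where i: "i < n" "v $ i \<noteq> 0"
      using v(1,2) by (metis carrier_vecD eq_vecI index_zero_vec)
    have s0: "s \<noteq> 0" using vi[OF i(1)] i(2) by auto
    have "(\<Sum>r\<in>R. v $ r) = (\<Sum>r\<in>R. s / (of_nat l - x))"
      by (rule sum.cong) (use R vi in auto)
    hence "s = (\<Sum>r\<in>R. s / (of_nat l - x))" by (simp only: s_def[symmetric])
    also have "\<dots> = of_nat l * s / (of_nat l - x)" by (simp add: l_def)
    finally have "s * (of_nat l - x) = of_nat l * s" using xl by (simp add: field_simps)
    hence "s * x = 0" by (simp add: algebra_simps)
    thus False using s0 x0 by simp
  qed
qed

lemma Re_sum_mset: "sum_mset (image_mset Re M) = Re (sum_mset M)"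
  by (induction M) auto

theorem theorem3:
  fixes n l m :: nat
  assumes "n \<ge> 2" and "1 \<le> l" and "l \<le> n" and "m = l * (n - 1)"
  shows "(\<forall>E. simple_digraph n E \<and> card E = m \<longrightarrow> algebraic_connectivity n E \<le> real l)
       \<and> (\<forall>R. R \<subseteq> {0..<n} \<and> card R = l \<longrightarrow>
            (let E = (\<Union>r\<in>R. directed_star n r) in
               simple_digraph n E \<and> card E = m \<and> algebraic_connectivity n E = real l))"
proof -
  have common: "sorted xs \<and> length xs = n \<and> sum_list xs = real l * (real n - 1) \<and>
      set xs = Re ` set_mset (lap_eigenvalues n E)"
    if sE: "simple_digraph n E" and cE: "card E = m"
      and xs: "xs = sorted_list_of_multiset (image_mset Re (lap_eigenvalues n E))" for E xs
  proof -
    have et: "size (lap_eigenvalues n E) = n \<and> sum_mset (lap_eigenvalues n E) = tr (laplacian n E)"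
      unfolding lap_eigenvalues_def by (rule eig_trace[OF lap_carrier])
    have ms: "mset xs = image_mset Re (lap_eigenvalues n E)" using xs by simp
    have "sum_list xs = sum_mset (mset xs)" by (simp add: sum_mset_sum_list)
    also have "\<dots> = Re (sum_mset (lap_eigenvalues n E))" using ms Re_sum_mset by simp
    also have "\<dots> = real m" using et tr_lap[OF sE] cE by simp
    also have "\<dots> = real l * (real n - 1)" using assms by (simp add: of_nat_diff)
    finally have "sum_list xs = real l * (real n - 1)" .
    moreover have "length xs = n" using et ms by (metis size_image_mset size_mset)
    moreover have "set xs = Re ` set_mset (lap_eigenvalues n E)"
      using ms by (metis set_image_mset set_mset_mset)
    ultimately show ?thesis using xs by simp
  qed
  show ?thesis
  proof (intro conjI allI impI)
    fix E assume h: "simple_digraph n E \<and> card E = m"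
    define xs where "xs = sorted_list_of_multiset (image_mset Re (lap_eigenvalues n E))"
    note c = common[OF conjunct1[OF h] conjunct2[OF h] xs_def]
    have "0 \<in># lap_eigenvalues n E" using zero_eig[of n E] h assms by simp
    hence "0 \<in> set xs" using c by force
    hence "xs ! 1 \<le> real l" using c assms part1_list[of xs n l] by simp
    thus "algebraic_connectivity n E \<le> real l" unfolding algebraic_connectivity_def xs_def .
  next
    fix R assume hR: "R \<subseteq> {0..<n} \<and> card R = l"
    define E where "E = (\<Union>r\<in>R. directed_star n r)"
    have sE: "simple_digraph n E" using star_simple hR E_def by simp
    have cE: "card E = m" using star_card hR E_def assms by simp
    define xs where "xs = sorted_list_of_multiset (image_mset Re (lap_eigenvalues n E))"
    note c = common[OF sE cE xs_def]
    have "set xs \<subseteq> {0, real l}"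
    proof
      fix y assume "y \<in> set xs"
      then obtain x where x: "x \<in># lap_eigenvalues n E" "y = Re x" using c by auto
      have "x = 0 \<or> x = of_nat l" using star_eig[of R n x] mem_eig[OF x(1)] hR E_def by simp
      thus "y \<in> {0, real l}" using x by auto
    qed
    hence "xs ! 1 = real l" using c assms part2_list[of xs n l] by simp
    hence "algebraic_connectivity n E = real l" unfolding algebraic_connectivity_def xs_def .
    thus "let E = \<Union> (directed_star n ` R) in simple_digraph n E \<and> card E = m \<and> algebraic_connectivity n E = real l"
      using sE cE unfolding E_def Let_def by simp
  qed
qed

end
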